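(* Let $\ell,n$ be positive integers with $2^\ell\le n$. If $A\subseteq\mathbb{Z}_{2^n}$ has size $|A|>\left(1-\frac{1}{2^\ell-1}\right)2^n$, then there exists $x\in\mathbb{Z}_{2^n}$ such that $\{x,2x,3x,\dots,(2^\ell-1)x\}\subseteq A$.
   Context: Arithmetic is in $\mathbb{Z}_{2^n}$. *)

theory Defs
  imports Complex_Main
begin

end

theory Submission
  imports Defs "HOL-Number_Theory.Cong"
begin


lemma card_odd_below: "card {u::nat. u < 2 * M \<and> odd u} = M"
proof -
  have "{u::nat. u < 2 * M \<and> odd u} = (\<lambda>i. 2*i+1) ` {..<M}"
  proof (rule set_eqI, rule iffI)
    fix u assume "u \<in> {u::nat. u < 2 * M \<and> odd u}"
    then have "u = 2*(u div 2)+1" "u div 2 < M" by auto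
    then show "u \<in> (\<lambda>i. 2*i+1) ` {..<M}" by (metis imageI lessThan_iff)
  qed auto
  moreover have "inj_on (\<lambda>i::nat. 2*i+1) {..<M}" by (auto simp: inj_on_def)
  ultimately show ?thesis by (simp add: card_image)
qed

lemma odd_factor: "0 < (k::nat) \<Longrightarrow> \<exists>j k'. odd k' \<and> k = 2^j * k'"
proof (induction k rule: less_induct)
  case (less k)
  show ?case
  proof (cases "odd k")
    case True then show ?thesis by (metis power_0 mult_1)
  next
    case False
    then obtain h where h: "k = 2*h" by blast
    with less.prems have "0 < h" "h < k" by auto
    with less.IH obtain j k' where "odd k'" "h = 2^j*k'" by blast
    with h show ?thesis by (metis mult.assoc power_Suc)
  qed
qed

lemma mod_pow_split:
  assumes "j \<le> n"
  shows "((2::nat)^j * u) mod 2^n = 2^j * (u mod 2^(n-j))"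
proof -
  have "(2::nat)^n = 2^j * 2^(n-j)" using assms by (simp add: power_add[symmetric])
  then show ?thesis by (simp add: mod_mult_mult1)
qed



lemma odd_mod_pow: "0 < n \<Longrightarrow> odd ((x::nat) mod 2^n) \<longleftrightarrow> odd x"
  by (simp add: odd_iff_mod_2_eq_one mod_mod_cancel)

lemma step3:
  fixes B :: "nat set"
  assumes "odd (k'::nat)"
  shows "card {u. (u < 2^n \<and> odd u) \<and> (2^j*k'*u) mod 2^n \<in> B}
       \<le> card {u. (u < 2^n \<and> odd u) \<and> (2^j*u) mod 2^n \<in> B}"
proof (rule card_inj_on_le[where f="\<lambda>u. (k'*u) mod 2^n"])
  have cop: "coprime k' (2^n)" using assms by simp
  show "inj_on (\<lambda>u. k' * u mod 2 ^ n) {u. (u < 2 ^ n \<and> odd u) \<and> 2 ^ j * k' * u mod 2 ^ n \<in> B}"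
  proof (rule inj_onI)
    fix x y assume x: "x \<in> {u. (u < 2 ^ n \<and> odd u) \<and> 2 ^ j * k' * u mod 2 ^ n \<in> B}"
      and y: "y \<in> {u. (u < 2 ^ n \<and> odd u) \<and> 2 ^ j * k' * u mod 2 ^ n \<in> B}"
      and e: "k' * x mod 2 ^ n = k' * y mod 2 ^ n"
    then have "[k' * x = k' * y] (mod 2^n)" by (simp add: cong_def)
    then have "[x = y] (mod 2^n)" using cop cong_mult_lcancel_nat by blast
    then show "x = y" using x y by (simp add: cong_def)
  qed
  show "(\<lambda>u. k' * u mod 2 ^ n) ` {u. (u < 2 ^ n \<and> odd u) \<and> 2 ^ j * k' * u mod 2 ^ n \<in> B}
    \<subseteq> {u. (u < 2 ^ n \<and> odd u) \<and> 2 ^ j * u mod 2 ^ n \<in> B}"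
  proof (rule image_subsetI)
    fix u assume "u \<in> {u. (u < 2 ^ n \<and> odd u) \<and> 2 ^ j * k' * u mod 2 ^ n \<in> B}"
    then have "u < 2^n" "odd u" "2 ^ j * k' * u mod 2 ^ n \<in> B" by auto
    moreover have "2 ^ j * (k' * u mod 2 ^ n) mod 2 ^ n = 2 ^ j * k' * u mod 2 ^ n"
      by (metis mod_mult_right_eq mult.assoc)
    moreover have "odd (k' * u mod 2 ^ n)"
      using assms \<open>odd u\<close> \<open>u < 2^n\<close> odd_mod_pow[of n "k'*u"] by (cases n) auto
    ultimately show "k' * u mod 2 ^ n \<in> {u. (u < 2 ^ n \<and> odd u) \<and> 2 ^ j * u mod 2 ^ n \<in> B}"
      by simp
  qed
  show "finite {u::nat. (u < 2 ^ n \<and> odd u) \<and> 2 ^ j * u mod 2 ^ n \<in> B}" by simp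
qed

lemma step4:
  fixes B :: "nat set"
  assumes "j < n" and fin: "finite B"
  shows "card {u. (u < 2^n \<and> odd u) \<and> (2^j*u) mod 2^n \<in> B}
       \<le> 2^j * card (B \<inter> {y. \<exists>w. odd w \<and> y = 2^j*w})"
proof -
  let ?M = "(2::nat)^(n-j)"
  have pn: "(2::nat)^n = 2^j * ?M" using assms by (simp add: power_add[symmetric])
  have "card {u. (u < 2^n \<and> odd u) \<and> (2^j*u) mod 2^n \<in> B}
      \<le> card ({..<(2::nat)^j} \<times> (B \<inter> {y. \<exists>w. odd w \<and> y = 2^j*w}))"
  proof (rule card_inj_on_le[where f="\<lambda>u. (u div ?M, 2^j * (u mod ?M))"])
    show "inj_on (\<lambda>u. (u div ?M, 2^j * (u mod ?M))) {u. (u < 2^n \<and> odd u) \<and> (2^j*u) mod 2^n \<in> B}"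
    proof (rule inj_onI)
      fix x y assume "(x div ?M, 2^j * (x mod ?M)) = (y div ?M, 2^j * (y mod ?M))"
      then have "x div ?M = y div ?M" "x mod ?M = y mod ?M" by auto
      then show "x = y" by (metis div_mult_mod_eq)
    qed
    show "(\<lambda>u. (u div ?M, 2^j * (u mod ?M))) ` {u. (u < 2^n \<and> odd u) \<and> (2^j*u) mod 2^n \<in> B}
      \<subseteq> {..<(2::nat)^j} \<times> (B \<inter> {y. \<exists>w. odd w \<and> y = 2^j*w})"
    proof (rule image_subsetI)
      fix u assume "u \<in> {u. (u < 2^n \<and> odd u) \<and> (2^j*u) mod 2^n \<in> B}"
      then have u: "u < 2^n" "odd u" "(2^j*u) mod 2^n \<in> B" by auto
      have "u div ?M < 2^j" using u(1) pn by (simp add: div_less_iff_less_mult mult.commute)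
      moreover have "2^j * (u mod ?M) \<in> B" using u(3) pn by (simp add: mod_mult_mult1)
      moreover have "odd (u mod ?M)" using u(2) assms odd_mod_pow[of "n-j" u] by simp
      ultimately show "(u div ?M, 2^j * (u mod ?M)) \<in> {..<(2::nat)^j} \<times> (B \<inter> {y. \<exists>w. odd w \<and> y = 2^j*w})"
        by blast
    qed
    show "finite ({..<(2::nat)^j} \<times> (B \<inter> {y. \<exists>w. odd w \<and> y = 2^j*w}))"
      using fin by (intro finite_cartesian_product) auto
  qed
  then show ?thesis by (simp add: card_cartesian_product)
qed



lemma pow_odd_inj:
  assumes "odd (w1::nat)" "odd w2" "2^j1 * w1 = 2^j2 * w2"
  shows "j1 = j2"
proof (rule ccontr)
  assume "j1 \<noteq> j2"
  then consider "j1 < j2" | "j2 < j1" by linarith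
  then show False
  proof cases
    case 1
    then have "(2::nat)^j2 = 2^j1 * 2^(j2-j1)" by (simp add: power_add[symmetric])
    with assms(3) have "w1 = 2^(j2-j1) * w2" by simp
    with 1 assms(1) show False by simp
  next
    case 2
    then have "(2::nat)^j1 = 2^j2 * 2^(j1-j2)" by (simp add: power_add[symmetric])
    with assms(3) have "w2 = 2^(j1-j2) * w1" by simp
    with 2 assms(2) show False by simp
  qed
qed

lemma level0:
  fixes l n :: nat and B :: "nat set"
  assumes l1: "1 \<le> l" and ln: "l \<le> n" and finB: "finite B"
    and bad: "\<And>u. u < 2^n \<Longrightarrow> odd u \<Longrightarrow> \<exists>k\<in>{1..2^l-1}. (k*u) mod 2^n \<in> B"
  shows "2^(n-l) \<le> card {y\<in>B. \<not> 2^l dvd y}"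
proof -
  define Ou where "Ou = {u::nat. u < 2^n \<and> odd u}"
  define E where "E j = {y::nat. \<exists>w. odd w \<and> y = 2^j*w}" for j :: nat
  define Od where "Od a = {k::nat. k < 2^a \<and> odd k}" for a :: nat
  define F where "F j k' = {u. u \<in> Ou \<and> (2^j*k'*u) mod 2^n \<in> B}" for j k' :: nat
  define G where "G j = {u. u \<in> Ou \<and> (2^j*u) mod 2^n \<in> B}" for j :: nat
  have cOu: "card Ou = 2^(n-1)"
  proof -
    have "(2::nat)^n = 2 * 2^(n-1)" using l1 ln by (cases n) auto
    then show ?thesis unfolding Ou_def using card_odd_below[of "2^(n-1)"] by (simp add: conj_commute)
  qed
  have cOd: "card (Od a) = 2^(a-1)" if "1 \<le> a" for a
  proof -
    have "(2::nat)^a = 2 * 2^(a-1)" using that by (cases a) auto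
    then show ?thesis unfolding Od_def using card_odd_below[of "2^(a-1)"] by (simp add: conj_commute)
  qed
  have sub: "Ou \<subseteq> (\<Union>j<l. \<Union>k'\<in>Od (l-j). F j k')"
  proof
    fix u assume u: "u \<in> Ou"
    then obtain k where k: "k \<in> {1..2^l-1}" "(k*u) mod 2^n \<in> B" using bad unfolding Ou_def by blast
    have k0: "0 < k" using k(1) by simp
    obtain j k' where jk: "odd k'" "k = 2^j*k'" using odd_factor[OF k0] by blast
    have "0 < k'" using jk(1) by (rule odd_pos)
    then have "2^j \<le> k" using jk(2) by simp
    also have kl: "k < 2^l"
    proof -
      have "(0::nat) < 2^l" by simp
      with k(1) show ?thesis by auto
    qed
    finally have "(2::nat)^j < 2^l" .
    then have jl: "j < l" using power_less_imp_less_exp by fastforce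
    have "(2::nat)^l = 2^j * 2^(l-j)" using jl by (simp add: power_add[symmetric])
    then have "k' < 2^(l-j)" using jk(2) kl by simp
    then have "k' \<in> Od (l-j)" using jk(1) unfolding Od_def by simp
    moreover have "u \<in> F j k'" using u k(2) jk(2) unfolding F_def by simp
    ultimately show "u \<in> (\<Union>j<l. \<Union>k'\<in>Od (l-j). F j k')" using jl by blast
  qed
  have finOd: "finite (Od a)" for a unfolding Od_def by simp
  have finF: "finite (F j k')" for j k' unfolding F_def Ou_def by simp
  have "card Ou \<le> card (\<Union>j<l. \<Union>k'\<in>Od (l-j). F j k')"
    using sub finOd finF by (intro card_mono) auto
  also have "\<dots> \<le> (\<Sum>j<l. card (\<Union>k'\<in>Od (l-j). F j k'))"
    by (rule card_UN_le) simp
  also have "\<dots> \<le> (\<Sum>j<l. \<Sum>k'\<in>Od (l-j). card (F j k'))"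
    using finOd by (intro sum_mono card_UN_le) auto
  also have "\<dots> \<le> (\<Sum>j<l. \<Sum>k'\<in>Od (l-j). 2^j * card (B \<inter> E j))"
  proof (intro sum_mono)
    fix j k' assume j: "j \<in> {..<l}" and k': "k' \<in> Od (l-j)"
    have "card (F j k') \<le> card (G j)"
      using step3[of k' n j B] k' unfolding F_def G_def Ou_def Od_def by simp
    also have "\<dots> \<le> 2^j * card (B \<inter> E j)"
      using step4[of j n B] j ln finB unfolding G_def Ou_def E_def by simp
    finally show "card (F j k') \<le> 2^j * card (B \<inter> E j)" .
  qed
  also have "\<dots> = (\<Sum>j<l. 2^(l-1) * card (B \<inter> E j))"
  proof (rule sum.cong)
    fix j assume j: "j \<in> {..<l}"
    have "(\<Sum>k'\<in>Od (l-j). 2^j * card (B \<inter> E j)) = 2^(l-j-1) * (2^j * card (B \<inter> E j))"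
      using cOd[of "l-j"] j by simp
    also have "\<dots> = 2^(l-1) * card (B \<inter> E j)"
      using j by (simp add: power_add[symmetric] mult.assoc)
    finally show "(\<Sum>k'\<in>Od (l-j). 2^j * card (B \<inter> E j)) = 2^(l-1) * card (B \<inter> E j)" .
  qed simp
  also have "\<dots> = 2^(l-1) * (\<Sum>j<l. card (B \<inter> E j))"
    by (simp add: sum_distrib_left)
  also have "(\<Sum>j<l. card (B \<inter> E j)) = card (\<Union>j<l. B \<inter> E j)"
  proof (rule card_UN_disjoint[symmetric])
    show "\<forall>i\<in>{..<l}. \<forall>j\<in>{..<l}. i \<noteq> j \<longrightarrow> B \<inter> E i \<inter> (B \<inter> E j) = {}"
      unfolding E_def using pow_odd_inj by blast
  qed (use finB in auto)
  also have "card (\<Union>j<l. B \<inter> E j) \<le> card {y\<in>B. \<not> 2^l dvd y}"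
  proof (rule card_mono)
    show "finite {y\<in>B. \<not> 2^l dvd y}" using finB by simp
    show "(\<Union>j<l. B \<inter> E j) \<subseteq> {y\<in>B. \<not> 2^l dvd y}"
    proof clarify
      fix j y assume j: "j < l" and y: "y \<in> B" "y \<in> E j" and dv: "2^l dvd y"
      obtain w where w: "odd w" "y = 2^j*w" using y(2) unfolding E_def by blast
      have "(2::nat)^l = 2^j * 2^(l-j)" using j by (simp add: power_add[symmetric])
      then have "2^(l-j) dvd w" using dv w(2) by simp
      then have "2 dvd w" using j by (metis dvd_power dvd_trans zero_less_diff)
      with w(1) show False by simp
    qed
  qed
  finally have "2^(n-1) \<le> 2^(l-1) * card {y\<in>B. \<not> 2^l dvd y}"
    using cOu by simp
  moreover have "(2::nat)^(n-1) = 2^(l-1) * 2^(n-l)"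
    using l1 ln by (simp add: power_add[symmetric])
  ultimately show ?thesis by simp
qed



lemma main_ind:
  fixes l n :: nat and B :: "nat set" assumes l1: "1 \<le> l"
  shows "B \<subseteq> {..<2^n} \<Longrightarrow> (\<forall>x<2^n. \<exists>k\<in>{1..2^l-1}. (k*x) mod 2^n \<in> B)
    \<Longrightarrow> 2^n + (2^l-1) \<le> (2^l-1) * card B + 2^(n mod l)"
proof (induction n arbitrary: B rule: less_induct)
  case (less n B)
  have finB: "finite B" using less.prems(1) finite_subset[OF _ finite_lessThan] by blast
  show ?case
  proof (cases "n < l")
    case True
    have "(0::nat) < 2^n" by simp
    then obtain k where "(k*0) mod 2^n \<in> B" using less.prems(2) by blast
    then have "0 \<in> B" by simp
    then have "0 < card B" using finB card_gt_0_iff by blast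
    then have "1 \<le> card B" by simp
    then have "((2::nat)^l-1) * 1 \<le> (2^l-1) * card B" by (rule mult_le_mono2)
    moreover have "(2::nat)^(n mod l) = 2^n" using True by simp
    ultimately show ?thesis by linarith
  next
    case False
    then have ln: "l \<le> n" by simp
    define B' where "B' = {y. y < 2^(n-l) \<and> 2^l*y \<in> B}"
    have pn: "(2::nat)^n = 2^l * 2^(n-l)" using ln by (simp add: power_add[symmetric])
    have bad': "\<forall>x<2^(n-l). \<exists>k\<in>{1..2^l-1}. (k*x) mod 2^(n-l) \<in> B'"
    proof (intro allI impI)
      fix x :: nat assume x: "x < 2^(n-l)"
      then have "2^l*x < 2^n" using pn by simp
      then obtain k where k: "k\<in>{1..2^l-1}" "(k*(2^l*x)) mod 2^n \<in> B" using less.prems(2) by blast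
      have "(k*(2^l*x)) mod 2^n = 2^l * ((k*x) mod 2^(n-l))"
        using mod_pow_split[OF ln, of "k*x"] by (simp add: ac_simps)
      then have "(k*x) mod 2^(n-l) \<in> B'" using k(2) unfolding B'_def by simp
      with k(1) show "\<exists>k\<in>{1..2^l-1}. (k*x) mod 2^(n-l) \<in> B'" by blast
    qed
    have IH: "2^(n-l) + (2^l-1) \<le> (2^l-1) * card B' + 2^((n-l) mod l)"
      using less.IH[of "n-l" B'] l1 ln bad' unfolding B'_def by auto
    have rmod: "(n-l) mod l = n mod l" using ln by (simp add: le_mod_geq)
    have L0: "2^(n-l) \<le> card {y\<in>B. \<not> 2^l dvd y}"
    proof (rule level0[OF l1 ln finB])
      fix u :: nat assume "u < 2^n" "odd u"
      then show "\<exists>k\<in>{1..2^l-1}. (k*u) mod 2^n \<in> B" using less.prems(2) by blast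
    qed
    have cB': "card B' \<le> card {y\<in>B. 2^l dvd y}"
    proof (rule card_inj_on_le[where f="\<lambda>y. 2^l*y"])
      show "inj_on (\<lambda>y. 2^l*y) B'" by (auto simp: inj_on_def)
      show "(\<lambda>y. 2^l*y) ` B' \<subseteq> {y\<in>B. 2^l dvd y}" unfolding B'_def by auto
      show "finite {y\<in>B. 2^l dvd y}" using finB by simp
    qed
    have "card B = card {y\<in>B. \<not> 2^l dvd y} + card {y\<in>B. 2^l dvd y}"
    proof -
      have "B = {y\<in>B. \<not> 2^l dvd y} \<union> {y\<in>B. 2^l dvd y}" by auto
      moreover have "card ({y\<in>B. \<not> 2^l dvd y} \<union> {y\<in>B. 2^l dvd y}) = card {y\<in>B. \<not> 2^l dvd y} + card {y\<in>B. 2^l dvd y}"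
        by (rule card_Un_disjoint) (use finB in auto)
      ultimately show ?thesis by simp
    qed
    then have cB: "2^(n-l) + card B' \<le> card B" using L0 cB' by linarith
    define m :: nat where "m = 2^l - 1"
    have m: "(2::nat)^l = m + 1" unfolding m_def by simp
    have "2^n + m = m * 2^(n-l) + 2^(n-l) + m" using pn m by simp
    also have "\<dots> \<le> m * 2^(n-l) + m * card B' + 2^(n mod l)"
    proof -
      have "2^(n-l) + m \<le> m*card B' + 2^(n mod l)" using IH rmod unfolding m_def by simp
      then show ?thesis by linarith
    qed
    also have "\<dots> = m * (2^(n-l) + card B') + 2^(n mod l)" by (simp add: algebra_simps)
    also have "\<dots> \<le> m * card B + 2^(n mod l)" using cB by simp
    finally show ?thesis unfolding m_def .
  qed
qed



theorem claim2p2: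
  fixes l n :: nat and A :: "nat set"
  assumes "0 < l" and "0 < n" and "2 ^ l \<le> n"
    and "A \<subseteq> {0..<2 ^ n}"
    and "real (card A) > (1 - 1 / (2 ^ l - 1)) * (2::real) ^ n"
  shows "\<exists>x \<in> {0..<2 ^ n}. \<forall>k \<in> {1..2 ^ l - 1}. (k * x) mod 2 ^ n \<in> A"
proof (rule ccontr)
  assume no: "\<not> ?thesis"
  define B where "B = {..<(2::nat)^n} - A"
  define m :: nat where "m = 2^l - 1"
  have Bsub: "B \<subseteq> {..<2^n}" unfolding B_def by auto
  have bad: "\<forall>x<2^n. \<exists>k\<in>{1..2^l-1}. (k*x) mod 2^n \<in> B"
  proof (intro allI impI)
    fix x :: nat assume "x < 2^n"
    then have "x \<in> {0..<2^n}" by simp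
    moreover have "\<forall>x\<in>{0..<2^n}. \<exists>k\<in>{1..2^l-1}. (k*x) mod 2^n \<notin> A" using no by blast
    ultimately obtain k where k: "k \<in> {1..2^l-1}" "(k*x) mod 2^n \<notin> A" by blast
    have "(k*x) mod 2^n < 2^n" by simp
    with k show "\<exists>k\<in>{1..2^l-1}. (k*x) mod 2^n \<in> B" unfolding B_def by blast
  qed
  have M: "2^n + m \<le> m * card B + 2^(n mod l)"
    using main_ind[where l=l and n=n and B=B] assms(1) Bsub bad unfolding m_def by simp
  have "n mod l < l" using assms(1) by simp
  then have "(2::nat)^(n mod l) \<le> 2^(l-1)" by (intro power_increasing) auto
  also have "(2::nat)^(l-1) \<le> m"
  proof -
    have "(2::nat)^l = 2 * 2^(l-1)" using assms(1) by (cases l) auto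
    moreover have "(1::nat) \<le> 2^(l-1)" by simp
    ultimately show ?thesis unfolding m_def by linarith
  qed
  finally have "2^n \<le> m * card B" using M by linarith
  moreover have "card B = 2^n - card A"
  proof -
    have finA: "finite A" using assms(4) finite_subset[OF _ finite_atLeastLessThan] by blast
    have "A \<subseteq> {..<2^n}" using assms(4) by (simp add: atLeast0LessThan)
    then show ?thesis unfolding B_def using card_Diff_subset[OF finA] by simp
  qed
  moreover have cA: "card A \<le> 2^n"
    using card_mono[OF _ assms(4)] by simp
  ultimately have H: "(2::real)^n \<le> real m * (2^n - real (card A))"
    by (metis of_nat_diff of_nat_le_iff of_nat_mult of_nat_numeral of_nat_power)
  moreover have rm: "real m = (2::real)^l - 1" unfolding m_def
    by (simp add: of_nat_diff)
  moreover have "real m \<ge> 1" unfolding m_def using assms(1)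
    by (metis One_nat_def Suc_leI less_numeral_extra(1) less_one one_less_power zero_less_diff nat_less_le of_nat_1 of_nat_le_iff numeral_le_one_iff semiring_norm(69) one_le_numeral le_diff_conv one_add_one) 
  have "real m * real (card A) \<le> (real m - 1) * 2^n"
  proof -
    have "real m * (2^n - real (card A)) = real m * 2^n - real m * real (card A)"
      by (simp add: right_diff_distrib)
    moreover have "(real m - 1) * 2^n = real m * 2^n - 2^n" by (simp add: left_diff_distrib)
    ultimately show ?thesis using H by argo
  qed
  moreover have "(real m - 1) * 2^n < real m * real (card A)"
  proof -
    have "(1 - 1 / real m) * 2^n < real (card A)" using assms(5) rm by simp
    then have "real m * ((1 - 1 / real m) * 2^n) < real m * real (card A)"
      using \<open>real m \<ge> 1\<close> by (intro mult_strict_left_mono) auto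
    moreover have "real m * ((1 - 1 / real m) * 2^n) = (real m - 1) * 2^n"
      using \<open>real m \<ge> 1\<close> by (simp add: field_simps)
    ultimately show ?thesis by simp
  qed
  ultimately show False by simp
qed


end
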